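(* Let $(S,T,\alpha,\beta)$ be a matched product system of left inverse semi-braces. Then $S\times T$ with the operations $$(a,u)+(b,v)=(a+b,\,u+v),\qquad (a,u)(b,v)=\left(\alpha_u(\alpha_u^{-1}(a)\,b),\ \beta_a(\beta_a^{-1}(u)\,v)\right)$$ for all $(a,u),(b,v)\in S\times T$, is a left inverse semi-brace (called the matched product $S\bowtie T$).
   Context: An inverse semigroup is a semigroup $(S,\cdot)$ in which for each $a$ there is a unique $a^{-1}$ with $aa^{-1}a=a$, $a^{-1}aa^{-1}=a^{-1}$. A left inverse semi-brace is a triple $(S,+,\cdot)$ with $(S,+)$ a semigroup, $(S,\cdot)$ an inverse semigroup and $a(b+c)=ab+a(a^{-1}+c)$ for all $a,b,c$. A matched product system of left inverse semi-braces is a quadruple $(S,T,\alpha,\beta)$ where $S,T$ are left inverse semi-braces, $\alpha:T\to\mathrm{Aut}(S,+)$ is a homomorphism of inverse semigroups from $(T,\cdot)$ into the automorphism group of $(S,+)$, $\beta:S\to\mathrm{Aut}(T,+)$ is a homomorphism of inverse semigroups from $(S,\cdot)$ into the automorphism group of $(T,+)$ (write $\alpha_u=\alpha(u)$, $\beta_a=\beta(a)$, and $\alpha_u^{-1},\beta_a^{-1}$ for the inverse maps), such that for all $a,b\in S$, $u,v\in T$: $\alpha_u(\alpha_u^{-1}(a)\,b)=a\,\alpha_{\beta_a^{-1}(u)}(b)$ and $\beta_a(\beta_a^{-1}(u)\,v)=u\,\beta_{\alpha_u^{-1}(a)}(v)$; and if $\alpha_u(\alpha_u^{-1}(a)\,a)=a$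 and $\beta_a(\beta_a^{-1}(u)\,u)=u$, then $\alpha_u(a)=a$ and $\beta_a(u)=u$. *)

theory Defs
  imports Main
begin

text \<open>Structures are given on whole types; operations are passed explicitly.\<close>

definition is_semigroup :: "('a \<Rightarrow> 'a \<Rightarrow> 'a) \<Rightarrow> bool" where
  "is_semigroup f \<longleftrightarrow> (\<forall>x y z. f (f x y) z = f x (f y z))"

definition inverse_semigroup :: "('a \<Rightarrow> 'a \<Rightarrow> 'a) \<Rightarrow> bool" where
  "inverse_semigroup m \<longleftrightarrow> is_semigroup m \<and>
     (\<forall>a. \<exists>!b. m (m a b) a = a \<and> m (m b a) b = b)"

definition sg_inv :: "('a \<Rightarrow> 'a \<Rightarrow> 'a) \<Rightarrow> 'a \<Rightarrow> 'a" where
  "sg_inv m a = (THE b. m (m a b) a = a \<and> m (m b a) b = b)"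

definition left_inverse_semi_brace :: "('a \<Rightarrow> 'a \<Rightarrow> 'a) \<Rightarrow> ('a \<Rightarrow> 'a \<Rightarrow> 'a) \<Rightarrow> bool" where
  "left_inverse_semi_brace add m \<longleftrightarrow> is_semigroup add \<and> inverse_semigroup m \<and>
     (\<forall>a b c. m a (add b c) = add (m a b) (m a (add (sg_inv m a) c)))"

definition is_add_aut :: "('a \<Rightarrow> 'a \<Rightarrow> 'a) \<Rightarrow> ('a \<Rightarrow> 'a) \<Rightarrow> bool" where
  "is_add_aut add f \<longleftrightarrow> bij f \<and> (\<forall>x y. f (add x y) = add (f x) (f y))"

definition aut_hom :: "('b \<Rightarrow> 'b \<Rightarrow> 'b) \<Rightarrow> ('a \<Rightarrow> 'a \<Rightarrow> 'a) \<Rightarrow> ('b \<Rightarrow> 'a \<Rightarrow> 'a) \<Rightarrow> bool" where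
  "aut_hom mT addS \<alpha> \<longleftrightarrow> (\<forall>u. is_add_aut addS (\<alpha> u)) \<and>
     (\<forall>u v. \<alpha> (mT u v) = \<alpha> u \<circ> \<alpha> v)"

definition matched_product_system ::
  "('a \<Rightarrow> 'a \<Rightarrow> 'a) \<Rightarrow> ('a \<Rightarrow> 'a \<Rightarrow> 'a) \<Rightarrow> ('b \<Rightarrow> 'b \<Rightarrow> 'b) \<Rightarrow> ('b \<Rightarrow> 'b \<Rightarrow> 'b)
   \<Rightarrow> ('b \<Rightarrow> 'a \<Rightarrow> 'a) \<Rightarrow> ('a \<Rightarrow> 'b \<Rightarrow> 'b) \<Rightarrow> bool" where
  "matched_product_system addS mS addT mT \<alpha> \<beta> \<longleftrightarrow>
     left_inverse_semi_brace addS mS \<and> left_inverse_semi_brace addT mT \<and>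
     aut_hom mT addS \<alpha> \<and> aut_hom mS addT \<beta> \<and>
     (\<forall>a b u. \<alpha> u (mS (inv (\<alpha> u) a) b) = mS a (\<alpha> (inv (\<beta> a) u) b)) \<and>
     (\<forall>a u v. \<beta> a (mT (inv (\<beta> a) u) v) = mT u (\<beta> (inv (\<alpha> u) a) v)) \<and>
     (\<forall>a u. \<alpha> u (mS (inv (\<alpha> u) a) a) = a \<and> \<beta> a (mT (inv (\<beta> a) u) u) = u
        \<longrightarrow> \<alpha> u a = a \<and> \<beta> a u = u)"

end

theory Submission imports Defs begin

lemma sg_assoc: "is_semigroup m \<Longrightarrow> m (m x y) z = m x (m y z)"
  unfolding is_semigroup_def by blast

lemma isg_sg: "inverse_semigroup m \<Longrightarrow> is_semigroup m"
  unfolding inverse_semigroup_def by blast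

lemma sginv_props:
  assumes "inverse_semigroup m"
  shows "m (m a (sg_inv m a)) a = a" "m (m (sg_inv m a) a) (sg_inv m a) = sg_inv m a"
proof -
  have "\<exists>!b. m (m a b) a = a \<and> m (m b a) b = b" using assms unfolding inverse_semigroup_def by blast
  from theI'[OF this] show "m (m a (sg_inv m a)) a = a" "m (m (sg_inv m a) a) (sg_inv m a) = sg_inv m a"
    unfolding sg_inv_def by auto
qed

lemma sginv_unique:
  assumes "inverse_semigroup m" "m (m a b) a = a" "m (m b a) b = b"
  shows "sg_inv m a = b"
proof -
  have "\<exists>!b. m (m a b) a = a \<and> m (m b a) b = b" using assms unfolding inverse_semigroup_def by blast
  then show ?thesis unfolding sg_inv_def using assms(2,3) by (simp add: the1_equality)
qed

lemma idem_comm: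
  assumes I: "inverse_semigroup m" and e: "m e e = e" and f: "m f f = f"
  shows "m e f = m f e"
proof -
  have A: "\<And>x y z. m (m x y) z = m x (m y z)" using I isg_sg sg_assoc by metis
  have idem: "m (m g h) (m g h) = m g h" if ge: "m g g = g" and hf: "m h h = h" for g h
  proof -
    define x where "x = sg_inv m (m g h)"
    have x1: "m (m (m g h) x) (m g h) = m g h" and x2: "m (m x (m g h)) x = x"
      using sginv_props[OF I] x_def by auto
    have "m (m (m g h) (m h (m x g))) (m g h) = m g h"
      using x1 ge hf A by metis
    moreover have "m (m (m h (m x g)) (m g h)) (m h (m x g)) = m h (m x g)"
    proof -
      have "m (m (m h (m x g)) (m g h)) (m h (m x g)) = m h (m (m (m x (m g h)) x) g)"
        using ge hf A by metis
      then show ?thesis using x2 by simp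
    qed
    ultimately have "sg_inv m (m g h) = m h (m x g)" using sginv_unique[OF I] by blast
    hence hx: "m h (m x g) = x" using x_def by simp
    have xx: "m x x = x"
    proof -
      have "m x x = m (m h (m x g)) (m h (m x g))" using hx by simp
      also have "\<dots> = m h (m (m (m x (m g h)) x) g)" using A by metis
      also have "\<dots> = x" using x2 hx by simp
      finally show ?thesis .
    qed
    have "m (m x x) x = x" using xx by simp
    hence "sg_inv m x = x" using sginv_unique[OF I] by blast
    moreover have "sg_inv m x = m g h"
      using sginv_unique[OF I, of x "m g h"] x1 x2 by simp
    ultimately have "m g h = x" by simp
    thus ?thesis using xx by simp
  qed
  have efe: "m (m (m e f) (m f e)) (m e f) = m e f"
    using idem[OF e f] e f A by metis
  have fef: "m (m (m f e) (m e f)) (m f e) = m f e"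
    using idem[OF f e] e f A by metis
  have "sg_inv m (m e f) = m f e" using sginv_unique[OF I] efe fef by blast
  moreover have "sg_inv m (m e f) = m e f" using sginv_unique[OF I] idem[OF e f] by simp
  ultimately show ?thesis by simp
qed

lemma unique_inv_comm:
  assumes S: "is_semigroup m"
    and C: "\<And>e f. m e e = e \<Longrightarrow> m f f = f \<Longrightarrow> m e f = m f e"
    and x1: "m (m a x) a = a" and x2: "m (m x a) x = x"
    and y1: "m (m a y) a = a" and y2: "m (m y a) y = y"
  shows "x = y"
proof -
  have A: "\<And>x y z. m (m x y) z = m x (m y z)" using S sg_assoc by metis
  have i1: "m (m x a) (m x a) = m x a" using x2 A by metis
  have i2: "m (m y a) (m y a) = m y a" using y2 A by metis
  have i3: "m (m a x) (m a x) = m a x" using x1 A by metis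
  have i4: "m (m a y) (m a y) = m a y" using y1 A by metis
  have "x = m (m x a) x" using x2 by simp
  also have "\<dots> = m (m x (m (m a y) a)) x" using y1 by simp
  also have "\<dots> = m (m (m x a) (m y a)) x" using A by metis
  also have "\<dots> = m (m (m y a) (m x a)) x" using C[OF i1 i2] by simp
  also have "\<dots> = m (m y a) (m (m x a) x)" using A by metis
  also have "\<dots> = m (m y a) x" using x2 by simp
  also have "\<dots> = m y (m a x)" using A by metis
  also have "\<dots> = m (m (m y a) y) (m a x)" using y2 by simp
  also have "\<dots> = m y (m (m a y) (m a x))" using A by metis
  also have "\<dots> = m y (m (m a x) (m a y))" using C[OF i3 i4] by simp
  also have "\<dots> = m y (m (m (m a x) a) y)" using A by metis
  also have "\<dots> = y" using x1 y2 A by metis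
  finally show ?thesis .
qed


lemma ah_bij: "aut_hom mT addS \<alpha> \<Longrightarrow> bij (\<alpha> u)"
  unfolding aut_hom_def is_add_aut_def by blast
lemma ah_add: "aut_hom mT addS \<alpha> \<Longrightarrow> \<alpha> u (addS x y) = addS (\<alpha> u x) (\<alpha> u y)"
  unfolding aut_hom_def is_add_aut_def by blast
lemma ah_comp: "aut_hom mT addS \<alpha> \<Longrightarrow> \<alpha> (mT u v) x = \<alpha> u (\<alpha> v x)"
  unfolding aut_hom_def by simp
lemma ah_inv1: "aut_hom mT addS \<alpha> \<Longrightarrow> \<alpha> u (inv (\<alpha> u) x) = x"
  using ah_bij bij_is_surj surj_f_inv_f by metis
lemma ah_inv2: "aut_hom mT addS \<alpha> \<Longrightarrow> inv (\<alpha> u) (\<alpha> u x) = x"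
  using ah_bij bij_is_inj inv_f_f by metis
lemma ah_inj: "aut_hom mT addS \<alpha> \<Longrightarrow> \<alpha> u x = \<alpha> u y \<Longrightarrow> x = y"
  using ah_inv2 by metis
lemma ah_idem: assumes H: "aut_hom mT addS \<alpha>" and f: "mT f f = f" shows "\<alpha> f x = x"
proof -
  have "\<alpha> f (\<alpha> f x) = \<alpha> f x" using ah_comp[OF H, of f f x] f by simp
  thus ?thesis using ah_inj[OF H] by blast
qed
lemma ah_idem_inv: assumes H: "aut_hom mT addS \<alpha>" and f: "mT f f = f" shows "inv (\<alpha> f) x = x"
  using ah_inv2[OF H, of f x] ah_idem[OF H f] by simp
lemma ah_sginv_pt:
  assumes H: "aut_hom mT addS \<alpha>" and I: "inverse_semigroup mT"
  shows "\<alpha> (sg_inv mT u) x = inv (\<alpha> u) x"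
proof -
  have A: "\<And>x y z. mT (mT x y) z = mT x (mT y z)" using I isg_sg sg_assoc by metis
  have "mT (mT u (sg_inv mT u)) (mT u (sg_inv mT u)) = mT u (sg_inv mT u)"
    using sginv_props[OF I, of u] A by metis
  hence "\<alpha> u (\<alpha> (sg_inv mT u) x) = x" using ah_idem[OF H] ah_comp[OF H] by metis
  thus ?thesis using ah_inv2[OF H] by metis
qed
lemma ah_sginv:
  assumes H: "aut_hom mT addS \<alpha>" and I: "inverse_semigroup mT"
  shows "\<alpha> (sg_inv mT u) = inv (\<alpha> u)"
  using ah_sginv_pt[OF H I] by blast
lemma ah_inv_sginv:
  assumes H: "aut_hom mT addS \<alpha>" and I: "inverse_semigroup mT"
  shows "inv (\<alpha> (sg_inv mT u)) x = \<alpha> u x"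
  using ah_sginv[OF H I] ah_bij[OF H] inv_inv_eq by metis
lemma ah_inv_comp:
  assumes H: "aut_hom mT addS \<alpha>"
  shows "inv (\<alpha> (mT s t)) z = inv (\<alpha> t) (inv (\<alpha> s) z)"
proof -
  have "\<alpha> (mT s t) (inv (\<alpha> t) (inv (\<alpha> s) z)) = z" using ah_comp[OF H] ah_inv1[OF H] by metis
  thus ?thesis using ah_inv2[OF H] by metis
qed

lemma mps_swap: "matched_product_system addS mS addT mT \<alpha> \<beta> \<Longrightarrow> matched_product_system addT mT addS mS \<beta> \<alpha>"
  unfolding matched_product_system_def by blast

context
  fixes addS mS :: "'a \<Rightarrow> 'a \<Rightarrow> 'a" and addT mT :: "'b \<Rightarrow> 'b \<Rightarrow> 'b"
    and \<alpha> :: "'b \<Rightarrow> 'a \<Rightarrow> 'a" and \<beta> :: "'a \<Rightarrow> 'b \<Rightarrow> 'b"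
  assumes M: "matched_product_system addS mS addT mT \<alpha> \<beta>"
begin

lemma LS: "left_inverse_semi_brace addS mS" using M unfolding matched_product_system_def by blast
lemma LT: "left_inverse_semi_brace addT mT" using M unfolding matched_product_system_def by blast
lemma IS: "inverse_semigroup mS" using LS unfolding left_inverse_semi_brace_def by blast
lemma IT: "inverse_semigroup mT" using LT unfolding left_inverse_semi_brace_def by blast
lemma AS: "mS (mS x y) z = mS x (mS y z)" using IS isg_sg sg_assoc by metis
lemma HA: "aut_hom mT addS \<alpha>" using M unfolding matched_product_system_def by blast
lemma HB: "aut_hom mS addT \<beta>" using M unfolding matched_product_system_def by blast
lemma alt1: "\<alpha> u (mS (inv (\<alpha> u) a) b) = mS a (\<alpha> (inv (\<beta> a) u) b)"
  using M unfolding matched_product_system_def by blast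
lemma alt2: "\<beta> a (mT (inv (\<beta> a) u) v) = mT u (\<beta> (inv (\<alpha> u) a) v)"
  using M unfolding matched_product_system_def by blast
lemma cond3: "\<alpha> u (mS (inv (\<alpha> u) a) a) = a \<Longrightarrow> \<beta> a (mT (inv (\<beta> a) u) u) = u \<Longrightarrow> \<alpha> u a = a"
  using M unfolding matched_product_system_def by blast

lemma tw: "\<alpha> t (mS y z) = mS (\<alpha> t y) (\<alpha> (inv (\<beta> (\<alpha> t y)) t) z)"
  using alt1[of t "\<alpha> t y" z] ah_inv2[OF HA] by simp

lemma assoc_fst:
  "\<alpha> (\<beta> a (mT (inv (\<beta> a) u) v)) (mS (inv (\<alpha> (\<beta> a (mT (inv (\<beta> a) u) v))) (\<alpha> u (mS (inv (\<alpha> u) a) b))) d)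
   = \<alpha> u (mS (inv (\<alpha> u) a) (\<alpha> v (mS (inv (\<alpha> v) b) d)))"
proof -
  define u' where "u' = inv (\<beta> a) u"
  define X where "X = \<alpha> u' b"
  define c where "c = \<alpha> u (mS (inv (\<alpha> u) a) b)"
  define w where "w = \<beta> a (mT u' v)"
  have c: "c = mS a X" unfolding c_def X_def u'_def by (rule alt1)
  have X: "\<alpha> (mT u' v) (inv (\<alpha> v) b) = X" unfolding X_def using ah_comp[OF HA] ah_inv1[OF HA] by metis
  have "\<alpha> u (mS (inv (\<alpha> u) a) (\<alpha> v (mS (inv (\<alpha> v) b) d))) = mS a (\<alpha> u' (\<alpha> v (mS (inv (\<alpha> v) b) d)))"
    unfolding u'_def by (rule alt1)
  also have "\<dots> = mS a (\<alpha> (mT u' v) (mS (inv (\<alpha> v) b) d))" using ah_comp[OF HA] by metis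
  also have "\<dots> = mS a (mS X (\<alpha> (inv (\<beta> X) (mT u' v)) d))" using tw X by metis
  also have "\<dots> = mS c (\<alpha> (inv (\<beta> X) (mT u' v)) d)" using c AS by metis
  finally have R: "\<alpha> u (mS (inv (\<alpha> u) a) (\<alpha> v (mS (inv (\<alpha> v) b) d))) = mS c (\<alpha> (inv (\<beta> X) (mT u' v)) d)" .
  have L: "\<alpha> w (mS (inv (\<alpha> w) c) d) = mS c (\<alpha> (inv (\<beta> c) w) d)" by (rule alt1)
  have "inv (\<beta> c) w = inv (\<beta> X) (mT u' v)"
    unfolding c w_def using ah_inv_comp[OF HB] ah_inv2[OF HB] by metis
  thus ?thesis using L R unfolding c_def w_def u'_def by simp
qed

lemma idem_fst:
  assumes "\<alpha> u (mS (inv (\<alpha> u) a) a) = a" "\<beta> a (mT (inv (\<beta> a) u) u) = u"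
  shows "mS a a = a"
proof -
  have "\<alpha> u a = a" using cond3 assms by blast
  hence ia: "inv (\<alpha> u) a = a" using ah_inv2[OF HA] by metis
  hence "\<alpha> u (mS a a) = \<alpha> u a" using assms(1) \<open>\<alpha> u a = a\<close> by simp
  thus ?thesis using ah_inj[OF HA] by blast
qed

lemma idem_prod_fst:
  assumes "mT f f = f"
  shows "\<alpha> f (mS (inv (\<alpha> f) e) g) = mS e g"
  using ah_idem[OF HA assms] ah_idem_inv[OF HA assms] by simp

lemma xy_fst:
  "\<alpha> u (mS (inv (\<alpha> u) a) (inv (\<alpha> (inv (\<beta> a) u)) (sg_inv mS a))) = mS a (sg_inv mS a)"
  using alt1 ah_inv1[OF HA] by metis

lemma idem_sginv: "mS (mS a (sg_inv mS a)) (mS a (sg_inv mS a)) = mS a (sg_inv mS a)"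
  using sginv_props[OF IS, of a] AS by metis

lemma xyx_fst:
  "\<alpha> (mT u (sg_inv mT u)) (mS (inv (\<alpha> (mT u (sg_inv mT u))) (mS a (sg_inv mS a))) a) = a"
proof -
  have "mT (mT u (sg_inv mT u)) (mT u (sg_inv mT u)) = mT u (sg_inv mT u)"
    using sginv_props[OF IT, of u] IT isg_sg sg_assoc by metis
  thus ?thesis using idem_prod_fst sginv_props[OF IS] by simp
qed

lemma yxy_fst:
  fixes a u
  defines "b \<equiv> inv (\<alpha> (inv (\<beta> a) u)) (sg_inv mS a)"
    and "v \<equiv> inv (\<beta> (inv (\<alpha> u) a)) (sg_inv mT u)"
  shows "\<alpha> v (mS (inv (\<alpha> v) b) (mS a (sg_inv mS a))) = b"
proof -
  define u' where "u' = inv (\<beta> a) u"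
  define p where "p = inv (\<alpha> v) b"
  define t where "t = mT u' v"
  define e where "e = mS a (sg_inv mS a)"
  have tp: "\<alpha> t p = sg_inv mS a" unfolding t_def p_def b_def u'_def
    using ah_comp[OF HA] ah_inv1[OF HA] by metis
  have bt: "\<beta> a t = mT u (sg_inv mT u)" unfolding t_def u'_def v_def
    using alt2 ah_inv1[OF HB] by metis
  have fi: "mT (mT u (sg_inv mT u)) (mT u (sg_inv mT u)) = mT u (sg_inv mT u)"
    using sginv_props[OF IT, of u] IT isg_sg sg_assoc by metis
  have "\<alpha> t (mS p e) = mS (sg_inv mS a) (\<alpha> (inv (\<beta> (sg_inv mS a)) t) e)" using tw tp by metis
  also have "inv (\<beta> (sg_inv mS a)) t = mT u (sg_inv mT u)" using ah_inv_sginv[OF HB IS] bt by metis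
  also have "\<alpha> (mT u (sg_inv mT u)) e = e" using ah_idem[OF HA fi] .
  also have "mS (sg_inv mS a) e = sg_inv mS a" unfolding e_def using sginv_props[OF IS, of a] AS by metis
  finally have "\<alpha> t (mS p e) = \<alpha> t p" using tp by simp
  hence "mS p e = p" using ah_inj[OF HA] by blast
  thus ?thesis unfolding p_def e_def using ah_inv1[OF HA] by metis
qed

lemma brace_fst:
  "\<alpha> u (mS (inv (\<alpha> u) a) (addS b c)) = addS (\<alpha> u (mS (inv (\<alpha> u) a) b))
     (\<alpha> u (mS (inv (\<alpha> u) a) (addS (inv (\<alpha> (inv (\<beta> a) u)) (sg_inv mS a)) c)))"
proof -
  define u' where "u' = inv (\<beta> a) u"
  have B: "mS a (addS x y) = addS (mS a x) (mS a (addS (sg_inv mS a) y))" for x y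
    using LS unfolding left_inverse_semi_brace_def by blast
  have "\<alpha> u (mS (inv (\<alpha> u) a) (addS b c)) = mS a (addS (\<alpha> u' b) (\<alpha> u' c))"
    unfolding u'_def using alt1 ah_add[OF HA] by metis
  also have "\<dots> = addS (mS a (\<alpha> u' b)) (mS a (addS (sg_inv mS a) (\<alpha> u' c)))" by (rule B)
  also have "mS a (addS (sg_inv mS a) (\<alpha> u' c)) = \<alpha> u (mS (inv (\<alpha> u) a) (addS (inv (\<alpha> u') (sg_inv mS a)) c))"
    unfolding u'_def using alt1 ah_add[OF HA] ah_inv1[OF HA] by metis
  finally show ?thesis unfolding u'_def using alt1 by metis
qed

end

theorem theorem24:
  fixes addS mS :: "'a \<Rightarrow> 'a \<Rightarrow> 'a" and addT mT :: "'b \<Rightarrow> 'b \<Rightarrow> 'b"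
    and \<alpha> :: "'b \<Rightarrow> 'a \<Rightarrow> 'a" and \<beta> :: "'a \<Rightarrow> 'b \<Rightarrow> 'b"
  assumes "matched_product_system addS mS addT mT \<alpha> \<beta>"
  shows "left_inverse_semi_brace
           (\<lambda>(a, u) (b, v). (addS a b, addT u v))
           (\<lambda>(a, u) (b, v). (\<alpha> u (mS (inv (\<alpha> u) a) b), \<beta> a (mT (inv (\<beta> a) u) v)))"
  (is "left_inverse_semi_brace ?A ?P")
proof -
  note M = assms
  note M' = mps_swap[OF M]
  have Pe: "?P (a,u) (b,v) = (\<alpha> u (mS (inv (\<alpha> u) a) b), \<beta> a (mT (inv (\<beta> a) u) v))" for a u b v
    by simp
  have Ae: "?A (a,u) (b,v) = (addS a b, addT u v)" for a u b v by simp
  have assocP: "?P (?P x y) z = ?P x (?P y z)" for x y z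
  proof -
    obtain a u where x: "x = (a,u)" by fastforce
    obtain b v where y: "y = (b,v)" by fastforce
    obtain d w where z: "z = (d,w)" by fastforce
    show ?thesis unfolding x y z Pe prod.inject by (intro conjI assoc_fst[OF M] assoc_fst[OF M'])
  qed
  have semP: "is_semigroup ?P" unfolding is_semigroup_def using assocP by blast
  have idemP: "mS a a = a \<and> mT u u = u" if "?P (a,u) (a,u) = (a,u)" for a u
    using that idem_fst[OF M, of u a] idem_fst[OF M', of a u] by simp
  have idprod: "?P (a,u) (b,v) = (mS a b, mT u v)" if "mS a a = a" "mT u u = u" for a u b v
    using idem_prod_fst[OF M, of u a b] idem_prod_fst[OF M', of a u v] that by simp
  have commP: "?P x y = ?P y x" if "?P x x = x" "?P y y = y" for x y
  proof -
    obtain a u where x: "x = (a,u)" by fastforce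
    obtain b v where y: "y = (b,v)" by fastforce
    have i: "mS a a = a" "mT u u = u" "mS b b = b" "mT v v = v" using idemP that x y by auto
    show ?thesis unfolding x y using idprod[OF i(1,2)] idprod[OF i(3,4)] idem_comm[OF IS[OF M] i(1) i(3)] idem_comm[OF IT[OF M] i(2) i(4)] by simp
  qed
  define J where "J = (\<lambda>(a,u). (inv (\<alpha> (inv (\<beta> a) u)) (sg_inv mS a), inv (\<beta> (inv (\<alpha> u) a)) (sg_inv mT u)))"
  have xy: "?P x (J x) = (mS (fst x) (sg_inv mS (fst x)), mT (snd x) (sg_inv mT (snd x)))" for x
  proof -
    obtain a u where x: "x = (a,u)" by fastforce
    show ?thesis unfolding x J_def prod.case Pe fst_conv snd_conv prod.inject by (intro conjI xy_fst[OF M] xy_fst[OF M'])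
  qed
  have inv1: "?P (?P x (J x)) x = x" for x
  proof -
    obtain a u where x: "x = (a,u)" by fastforce
    show ?thesis unfolding xy unfolding x Pe fst_conv snd_conv prod.inject by (intro conjI xyx_fst[OF M] xyx_fst[OF M'])
  qed
  have inv2: "?P (?P (J x) x) (J x) = J x" for x
  proof -
    obtain a u where x: "x = (a,u)" by fastforce
    have "?P (?P (J x) x) (J x) = ?P (J x) (?P x (J x))" by (rule assocP)
    also have "\<dots> = J x" unfolding xy unfolding x J_def prod.case Pe fst_conv snd_conv prod.inject by (intro conjI yxy_fst[OF M] yxy_fst[OF M'])
    finally show ?thesis .
  qed
  have invP: "inverse_semigroup ?P"
    unfolding inverse_semigroup_def
  proof (intro conjI semP allI)
    fix x
    show "\<exists>!y. ?P (?P x y) x = x \<and> ?P (?P y x) y = y"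
    proof (rule ex1I[of _ "J x"])
      show "?P (?P x (J x)) x = x \<and> ?P (?P (J x) x) (J x) = J x" using inv1 inv2 by blast
    next
      fix y assume h: "?P (?P x y) x = x \<and> ?P (?P y x) y = y"
      from unique_inv_comm[OF semP commP h[THEN conjunct1] h[THEN conjunct2] inv1 inv2] show "y = J x" .
    qed
  qed
  have sgJ: "sg_inv ?P x = J x" for x by (rule sginv_unique[OF invP inv1 inv2])
  have semA: "is_semigroup ?A"
  proof -
    have "is_semigroup addS" using LS[OF M] unfolding left_inverse_semi_brace_def by blast
    moreover have "is_semigroup addT" using LT[OF M] unfolding left_inverse_semi_brace_def by blast
    ultimately show ?thesis unfolding is_semigroup_def by auto
  qed
  have braceP: "?P x (?A y z) = ?A (?P x y) (?P x (?A (sg_inv ?P x) z))" for x y z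
  proof -
    obtain a u where x: "x = (a,u)" by fastforce
    obtain b v where y: "y = (b,v)" by fastforce
    obtain d w where z: "z = (d,w)" by fastforce
    show ?thesis unfolding sgJ unfolding x y z J_def prod.case Pe Ae prod.inject by (intro conjI brace_fst[OF M] brace_fst[OF M'])
  qed
  show ?thesis unfolding left_inverse_semi_brace_def
    by (intro conjI semA invP allI braceP)
qed

end
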